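(* If $\mathfrak{p}=\mathfrak{c}$, then every almost disjoint family of size less than $\mathfrak{c}$ can be extended to a Shelah–Stepr\={a}ns MAD family.
   Context: An almost disjoint (AD) family is a family of infinite subsets of $\omega$ with pairwise finite intersections; MAD means maximal AD. $\mathcal{I}(\mathcal{A})$ is the ideal generated by $\mathcal{A}$ and the finite sets. For an ideal $\mathcal{I}$, $(\mathcal{I}^{<\omega})^+$ is the set of $X\subseteq[\omega]^{<\omega}\setminus\{\emptyset\}$ such that every $A\in\mathcal{I}$ is disjoint from some $s\in X$; $\mathcal{I}$ is Shelah–Stepr\={a}ns if for every $X\in(\mathcal{I}^{<\omega})^+$ there is an infinite $Y\subseteq X$ with $\bigcup Y\in\mathcal{I}$; $\mathcal{A}$ is Shelah–Stepr\={a}ns if $\mathcal{I}(\mathcal{A})$ is. $\mathfrak{p}$ is the pseudointersection number, $\mathfrak{c}=2^{\aleph_0}$. *)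

theory Defs
  imports Main
begin

definition almost_disjoint :: "nat set set \<Rightarrow> bool" where
  "almost_disjoint \<A> \<longleftrightarrow>
     (\<forall>a\<in>\<A>. infinite a) \<and> (\<forall>a\<in>\<A>. \<forall>b\<in>\<A>. a \<noteq> b \<longrightarrow> finite (a \<inter> b))"

definition MAD :: "nat set set \<Rightarrow> bool" where
  "MAD \<A> \<longleftrightarrow> almost_disjoint \<A> \<and>
     (\<forall>\<B>. almost_disjoint \<B> \<and> \<A> \<subseteq> \<B> \<longrightarrow> \<B> = \<A>)"

definition ideal_gen :: "nat set set \<Rightarrow> nat set set" where
  "ideal_gen \<A> = {X. \<exists>F. finite F \<and> F \<subseteq> \<A> \<and> finite (X - \<Union>F)}"

definition fin_pos :: "nat set set \<Rightarrow> nat set set set" where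
  "fin_pos I = {X. X \<subseteq> {s. finite s \<and> s \<noteq> {}} \<and> (\<forall>A\<in>I. \<exists>s\<in>X. A \<inter> s = {})}"

definition Shelah_Steprans_ideal :: "nat set set \<Rightarrow> bool" where
  "Shelah_Steprans_ideal I \<longleftrightarrow>
     (\<forall>X\<in>fin_pos I. \<exists>Y\<subseteq>X. infinite Y \<and> \<Union>Y \<in> I)"

definition Shelah_Steprans :: "nat set set \<Rightarrow> bool" where
  "Shelah_Steprans \<A> \<longleftrightarrow> Shelah_Steprans_ideal (ideal_gen \<A>)"

definition SFIP :: "nat set set \<Rightarrow> bool" where
  "SFIP \<F> \<longleftrightarrow> (\<forall>G. finite G \<and> G \<noteq> {} \<and> G \<subseteq> \<F> \<longrightarrow> infinite (\<Inter>G))"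

definition pseudointersection :: "nat set \<Rightarrow> nat set set \<Rightarrow> bool" where
  "pseudointersection B \<F> \<longleftrightarrow> infinite B \<and> (\<forall>F\<in>\<F>. finite (B - F))"

definition p_witness :: "nat set set \<Rightarrow> bool" where
  "p_witness \<F> \<longleftrightarrow> (\<forall>F\<in>\<F>. infinite F) \<and> SFIP \<F> \<and> \<not> (\<exists>B. pseudointersection B \<F>)"

text \<open>p = c: the least size of a witness family equals the continuum, i.e.
  every witness family has size at least c (p <= c holds in ZFC).\<close>
definition p_eq_c :: bool where
  "p_eq_c \<longleftrightarrow> (\<forall>\<F>. p_witness \<F> \<longrightarrow> (card_of (UNIV :: nat set set), card_of \<F>) \<in> ordLeq)"

end

theory Submission
  imports Defs "HOL-Algebra.Free_Abelian_Groups" "HOL-Library.Nat_Bijection"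
begin

lemma ad_subset: "almost_disjoint B \<Longrightarrow> A \<subseteq> B \<Longrightarrow> almost_disjoint A"
  unfolding almost_disjoint_def by blast

lemma inf_c: "infinite (UNIV :: nat set set)"
proof -
  have "inj (\<lambda>n::nat. {n})" by (auto simp: inj_on_def)
  hence "infinite (range (\<lambda>n::nat. {n}))" using finite_imageD infinite_UNIV_nat by blast
  thus ?thesis using infinite_super subset_UNIV by blast
qed

lemma key_pseudo:
  assumes pc: "p_eq_c" and card: "|P| <o |UNIV :: nat set set|"
    and X: "X \<in> fin_pos (ideal_gen P)"
  shows "\<exists>Y\<subseteq>X. infinite Y \<and> infinite (\<Union>Y) \<and> (\<forall>a\<in>P. finite (\<Union>Y \<inter> a))"
proof -
  define XF where "XF F = {s\<in>X. s \<inter> \<Union>F = {}}" for F :: "nat set set"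
  define fam where "fam = (\<lambda>F. set_encode ` XF F) ` Fpow P"
  have Xfin: "\<And>s. s \<in> X \<Longrightarrow> finite s \<and> s \<noteq> {}" using X unfolding fin_pos_def by blast
  have Xpos: "\<And>A. A \<in> ideal_gen P \<Longrightarrow> \<exists>s\<in>X. A \<inter> s = {}" using X unfolding fin_pos_def by blast
  have XFinf: "infinite (XF F)" if F: "F \<in> Fpow P" for F
  proof
    assume fin: "finite (XF F)"
    have fu: "finite (\<Union>(XF F))" using fin Xfin unfolding XF_def by auto
    have "\<Union>F \<union> \<Union>(XF F) \<in> ideal_gen P"
      unfolding ideal_gen_def using F fu unfolding Fpow_def
      by (intro CollectI exI[of _ F]) (auto intro: finite_subset[OF _ fu])
    then obtain s where s: "s \<in> X" "(\<Union>F \<union> \<Union>(XF F)) \<inter> s = {}" using Xpos by blast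
    hence "s \<in> XF F" unfolding XF_def by blast
    thus False using s Xfin by blast
  qed
  have encinj: "inj_on set_encode (XF F)" for F
    by (rule inj_on_subset[OF inj_on_set_encode]) (use Xfin in \<open>auto simp: XF_def\<close>)
  have faminf: "\<forall>G\<in>fam. infinite G"
    unfolding fam_def using XFinf encinj finite_image_iff by blast
  have sfip: "SFIP fam"
    unfolding SFIP_def
  proof (intro allI impI)
    fix G assume G: "finite G \<and> G \<noteq> {} \<and> G \<subseteq> fam"
    then obtain H where H: "H \<subseteq> Fpow P" "finite H" "G = (\<lambda>F. set_encode ` XF F) ` H"
      unfolding fam_def by (meson finite_subset_image)
    have UH: "\<Union>H \<in> Fpow P" using H unfolding Fpow_def by auto
    have "set_encode ` XF (\<Union>H) \<subseteq> \<Inter>G"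
      unfolding H(3) XF_def by blast
    moreover have "infinite (set_encode ` XF (\<Union>H))"
      using UH XFinf encinj finite_image_iff by blast
    ultimately show "infinite (\<Inter>G)" using finite_subset by blast
  qed
  have "|fam| <o |UNIV :: nat set set|"
  proof (cases "finite P")
    case True
    hence "finite fam" unfolding fam_def Fpow_def by simp
    thus ?thesis using inf_c finite_ordLess_infinite2 by blast
  next
    case False
    have "|fam| \<le>o |Fpow P|" unfolding fam_def by (rule card_of_image)
    also have "|Fpow P| =o |P|" using False by simp
    finally show ?thesis using card ordLeq_ordLess_trans by blast
  qed
  hence "\<not> p_witness fam" using pc unfolding p_eq_c_def using not_ordLess_ordLeq by blast
  then obtain B where B: "pseudointersection B fam" unfolding p_witness_def using faminf sfip by blast
  have XF0: "XF {} = X" unfolding XF_def by simp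
  have "set_encode ` X \<in> fam" unfolding fam_def using XF0 by (auto simp: Fpow_def image_iff intro!: bexI[of _ "{}"])
  hence Bfin: "finite (B - set_encode ` X)" using B unfolding pseudointersection_def by blast
  define B' where "B' = B \<inter> set_encode ` X"
  have B'inf: "infinite B'"
  proof -
    have "B - (B - set_encode ` X) = B'" unfolding B'_def by blast
    thus ?thesis using B Bfin Diff_infinite_finite unfolding pseudointersection_def by metis
  qed
  define Y where "Y = set_decode ` B'"
  have decinj: "inj set_decode" by (rule inj_on_inverseI[of _ set_encode]) simp
  have Yinf: "infinite Y" unfolding Y_def using B'inf decinj finite_imageD inj_on_subset subset_UNIV
    by blast
  have YX: "Y \<subseteq> X" unfolding Y_def B'_def using Xfin by auto
  have UYinf: "infinite (\<Union>Y)"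
  proof
    assume "finite (\<Union>Y)"
    hence "finite (Pow (\<Union>Y))" by simp
    moreover have "Y \<subseteq> Pow (\<Union>Y)" by blast
    ultimately show False using Yinf finite_subset by blast
  qed
  have "finite (\<Union>Y \<inter> a)" if a: "a \<in> P" for a
  proof -
    have "{a} \<in> Fpow P" using a unfolding Fpow_def by simp
    hence "set_encode ` XF {a} \<in> fam" unfolding fam_def by blast
    hence fin: "finite (B - set_encode ` XF {a})" using B unfolding pseudointersection_def by blast
    have "\<Union>Y \<inter> a \<subseteq> \<Union>(set_decode ` (B - set_encode ` XF {a}))"
    proof
      fix x assume x: "x \<in> \<Union>Y \<inter> a"
      then obtain b where b: "b \<in> B'" "x \<in> set_decode b" unfolding Y_def by blast
      then obtain s where s: "s \<in> X" "b = set_encode s" unfolding B'_def by blast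
      have ds: "set_decode b = s" using s Xfin by simp
      have "b \<notin> set_encode ` XF {a}"
      proof
        assume "b \<in> set_encode ` XF {a}"
        then obtain s' where "s' \<in> XF {a}" "b = set_encode s'" by blast
        hence "set_decode b \<inter> a = {}" using Xfin unfolding XF_def by auto
        thus False using b x by blast
      qed
      thus "x \<in> \<Union>(set_decode ` (B - set_encode ` XF {a}))" using b B'_def by blast
    qed
    moreover have "finite (\<Union>(set_decode ` (B - set_encode ` XF {a})))" using fin by simp
    ultimately show ?thesis using finite_subset by blast
  qed
  thus ?thesis using YX Yinf UYinf by blast
qed


definition stepP :: "nat set set \<Rightarrow> nat set \<Rightarrow> nat set set \<Rightarrow> bool" where
  "stepP P t N \<longleftrightarrow> finite N \<and> almost_disjoint (P \<union> N) \<and>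
     (almost_disjoint (P \<union> N \<union> {t}) \<longrightarrow> t \<in> P \<union> N) \<and>
     (set_decode ` t \<in> fin_pos (ideal_gen (P \<union> N)) \<longrightarrow>
        (\<exists>Y\<subseteq>set_decode ` t. infinite Y \<and> \<Union>Y \<in> ideal_gen (P \<union> N)))"

lemma step_exists:
  assumes pc: "p_eq_c" and ad: "almost_disjoint P" and card: "|P| <o |UNIV :: nat set set|"
  shows "\<exists>N. stepP P t N"
proof -
  define P1 where "P1 = (if almost_disjoint (insert t P) then insert t P else P)"
  have ad1: "almost_disjoint P1" using ad unfolding P1_def by auto
  have sub: "P \<subseteq> P1" unfolding P1_def by auto
  have fin1: "finite (P1 - P)" unfolding P1_def by (auto intro: finite_subset[of _ "{t}"])
  have "|P \<union> {t}| <o |UNIV :: nat set set|"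
    by (rule card_of_Un_ordLess_infinite[OF inf_c card finite_ordLess_infinite2[OF _ inf_c]]) simp
  moreover have "|P1| \<le>o |P \<union> {t}|" by (rule card_of_mono1) (auto simp: P1_def)
  ultimately have c1: "|P1| <o |UNIV :: nat set set|" using ordLeq_ordLess_trans by blast
  have tZ: "t \<in> P1 \<union> M" if "almost_disjoint (P1 \<union> M \<union> {t})" for M
  proof (cases "almost_disjoint (insert t P)")
    case True thus ?thesis unfolding P1_def by simp
  next
    case False
    have "insert t P \<subseteq> P1 \<union> M \<union> {t}" using sub by blast
    thus ?thesis using False ad_subset that by blast
  qed
  show ?thesis
  proof (cases "set_decode ` t \<in> fin_pos (ideal_gen P1)")
    case True
    then obtain Y where Y: "Y \<subseteq> set_decode ` t" "infinite Y" "infinite (\<Union>Y)"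
      "\<forall>a\<in>P1. finite (\<Union>Y \<inter> a)"
      using key_pseudo[OF pc c1] by blast
    define U where "U = \<Union>Y"
    define N where "N = (P1 - P) \<union> {U}"
    have PN: "P \<union> N = insert U P1" unfolding N_def using sub by blast
    have adN: "almost_disjoint (insert U P1)" unfolding almost_disjoint_def
    proof (intro conjI ballI impI)
      fix a assume "a \<in> insert U P1" thus "infinite a" using Y(3) ad1 unfolding almost_disjoint_def U_def by blast
    next
      fix a b assume a: "a \<in> insert U P1" and b: "b \<in> insert U P1" and ne: "a \<noteq> b"
      show "finite (a \<inter> b)"
      proof (cases "a = U")
        case True
        hence "b \<in> P1" using b ne by blast
        thus ?thesis using Y(4) True U_def by blast
      next
        case aU: False
        show ?thesis
        proof (cases "b = U")
          case True
          hence "a \<in> P1" using a aU by blast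
          hence "finite (b \<inter> a)" using Y(4) True U_def by blast
          thus ?thesis by (simp add: Int_commute)
        next
          case False
          hence "a \<in> P1" "b \<in> P1" using a b aU by auto
          thus ?thesis using ne ad1 unfolding almost_disjoint_def by blast
        qed
      qed
    qed
    have UI: "U \<in> ideal_gen (P \<union> N)" unfolding PN ideal_gen_def
      by (intro CollectI exI[of _ "{U}"]) auto
    have finN: "finite N" unfolding N_def using fin1 by simp
    have c3: "almost_disjoint (P \<union> N \<union> {t}) \<longrightarrow> t \<in> P \<union> N"
    proof
      assume "almost_disjoint (P \<union> N \<union> {t})"
      hence "almost_disjoint (P1 \<union> {U} \<union> {t})" using PN by (metis insert_is_Un sup_commute)
      hence "t \<in> P1 \<union> {U}" by (rule tZ)
      thus "t \<in> P \<union> N" using PN by blast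
    qed
    have c4: "\<exists>Y\<subseteq>set_decode ` t. infinite Y \<and> \<Union>Y \<in> ideal_gen (P \<union> N)"
      using Y(1,2) UI U_def by blast
    have "stepP P t N" unfolding stepP_def using finN adN PN c3 c4 by simp
    thus ?thesis by blast
  next
    case False
    define N where "N = P1 - P"
    have PN: "P \<union> N = P1" unfolding N_def using sub by blast
    have finN: "finite N" unfolding N_def using fin1 by simp
    have c3: "almost_disjoint (P1 \<union> {t}) \<longrightarrow> t \<in> P1" using tZ[of "{}"] by simp
    have "stepP P t N" unfolding stepP_def PN using finN ad1 False c3 by simp
    thus ?thesis by blast
  qed
qed

lemma ad_fin: "almost_disjoint x \<Longrightarrow> a \<in> x \<Longrightarrow> b \<in> x \<Longrightarrow> a \<noteq> b \<Longrightarrow> finite (a \<inter> b)"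
  unfolding almost_disjoint_def by simp
lemma ad_inf: "almost_disjoint x \<Longrightarrow> a \<in> x \<Longrightarrow> infinite a"
  unfolding almost_disjoint_def by simp
lemma ad_chain_union:
  assumes "\<forall>x\<in>S. almost_disjoint x" and "\<forall>x\<in>S. \<forall>y\<in>S. x \<subseteq> y \<or> y \<subseteq> x"
  shows "almost_disjoint (\<Union>S)"
  unfolding almost_disjoint_def
proof (intro conjI ballI impI)
  fix a assume "a \<in> \<Union>S" thus "infinite a" using assms(1) ad_inf by blast
next
  fix a b assume a: "a \<in> \<Union>S" and b: "b \<in> \<Union>S" and ne: "a \<noteq> b"
  then obtain x y where xy: "x \<in> S" "y \<in> S" "a \<in> x" "b \<in> y" by blast
  have "x \<subseteq> y \<or> y \<subseteq> x" using assms(2) xy(1,2) by blast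
  thus "finite (a \<inter> b)"
  proof
    assume "x \<subseteq> y"
    thus ?thesis using ad_fin[OF _ _ _ ne, of y] xy assms(1) by blast
  next
    assume "y \<subseteq> x"
    thus ?thesis using ad_fin[OF _ _ _ ne, of x] xy assms(1) by blast
  qed
qed

lemma ideal_gen_mono: "G \<subseteq> B \<Longrightarrow> ideal_gen G \<subseteq> ideal_gen B"
  unfolding ideal_gen_def by auto

lemma fin_pos_anti: "I \<subseteq> J \<Longrightarrow> fin_pos J \<subseteq> fin_pos I"
  unfolding fin_pos_def by auto

theorem mainTheorem9:
  assumes "p_eq_c"
    and "almost_disjoint \<A>"
    and "(card_of \<A>, card_of (UNIV :: nat set set)) \<in> ordLess"
  shows "\<exists>\<B>. \<A> \<subseteq> \<B> \<and> MAD \<B> \<and> Shelah_Steprans \<B>"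
proof -
  note pc = assms(1) and adA = assms(2) and cA = assms(3)
  define r where "r = |UNIV :: nat set set|"
  have wo: "wo_rel r" unfolding r_def wo_rel_def by (rule card_of_Well_order)
  have Cr: "Card_order r" unfolding r_def by (rule card_of_Card_order)
  have Fr: "Field r = UNIV" unfolding r_def by (rule Field_card_of)
  define H where "H f a = (SOME N. stepP (\<A> \<union> \<Union>(f ` underS r a)) a N)"
    for f :: "nat set \<Rightarrow> nat set set" and a
  define N where "N = wo_rel.worec r H"
  have adm: "wo_rel.adm_wo r H"
    unfolding wo_rel.adm_wo_def[OF wo] H_def
  proof (intro allI impI)
    fix f g :: "nat set \<Rightarrow> nat set set" and x
    assume "\<forall>y\<in>underS r x. f y = g y"
    hence "f ` underS r x = g ` underS r x" by (intro image_cong) auto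
    thus "(SOME N. stepP (\<A> \<union> \<Union>(f ` underS r x)) x N) = (SOME N. stepP (\<A> \<union> \<Union>(g ` underS r x)) x N)"
      by simp
  qed
  have Nfix: "N a = (SOME M. stepP (\<A> \<union> \<Union>(N ` underS r a)) a M)" for a
    using wo_rel.worec_fixpoint[OF wo adm] unfolding N_def[symmetric] H_def by metis
  define Prev where "Prev a = \<A> \<union> \<Union>(N ` underS r a)" for a
  have chain: "Prev a \<union> N a \<subseteq> Prev b" if "(a, b) \<in> r" "a \<noteq> b" for a b
  proof -
    have "underS r a \<subseteq> underS r b"
      using underS_incr[OF wo_rel.TRANS[OF wo] wo_rel.ANTISYM[OF wo] that(1)] .
    moreover have "a \<in> underS r b" using that unfolding underS_def by blast
    ultimately show ?thesis unfolding Prev_def by blast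
  qed
  have comp: "Prev a \<union> N a \<subseteq> Prev b \<union> N b \<or> Prev b \<union> N b \<subseteq> Prev a \<union> N a" for a b
  proof -
    have "(a,b) \<in> r \<or> (b,a) \<in> r" using wo_rel.TOTALS[OF wo] unfolding Fr by blast
    thus ?thesis using chain[of a b] chain[of b a] by (cases "a = b") auto
  qed
  have Asub: "\<A> \<subseteq> Prev a" for a unfolding Prev_def by blast
  have cinf: "infinite (UNIV :: nat set set)" by (rule inf_c)
  have main: "stepP (Prev a) a (N a)" for a
  proof (induction a rule: wo_rel.well_order_induct[OF wo])
    case (1 a)
    hence IH: "\<And>b. b \<in> underS r a \<Longrightarrow> stepP (Prev b) b (N b)" unfolding underS_def by blast
    define S where "S = insert \<A> ((\<lambda>b. Prev b \<union> N b) ` underS r a)"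
    have "almost_disjoint (\<Union>S)"
    proof (rule ad_chain_union)
      show "\<forall>x\<in>S. almost_disjoint x" unfolding S_def using adA IH unfolding stepP_def by blast
      show "\<forall>x\<in>S. \<forall>y\<in>S. x \<subseteq> y \<or> y \<subseteq> x" unfolding S_def using comp Asub by blast
    qed
    moreover have "Prev a \<subseteq> \<Union>S" unfolding S_def Prev_def by blast
    ultimately have adP: "almost_disjoint (Prev a)" using ad_subset by blast
    have U: "|underS r a| <o r" using card_of_underS[OF Cr] Fr by blast
    have UN: "|\<Union>(N ` underS r a)| <o r"
    proof (cases "finite (underS r a)")
      case True
      hence "finite (\<Union>(N ` underS r a))" using IH unfolding stepP_def by blast
      thus ?thesis unfolding r_def using cinf finite_ordLess_infinite2 by blast
    next
      case False
      have "|\<Union>(N ` underS r a)| \<le>o |underS r a|"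
      proof (rule card_of_UNION_ordLeq_infinite[OF False])
        show "|underS r a| \<le>o |underS r a|" by (rule ordLeq_refl) (rule card_of_Card_order)
        show "\<forall>i\<in>underS r a. |N i| \<le>o |underS r a|"
        proof
          fix i assume "i \<in> underS r a"
          hence "finite (N i)" using IH unfolding stepP_def by blast
          thus "|N i| \<le>o |underS r a|" by (rule ordLess_imp_ordLeq[OF finite_ordLess_infinite2[OF _ False]])
        qed
      qed
      thus ?thesis using U ordLeq_ordLess_trans by blast
    qed
    have cP: "|Prev a| <o |UNIV :: nat set set|"
      unfolding Prev_def using card_of_Un_ordLess_infinite[OF cinf cA] UN unfolding r_def by blast
    obtain M where "stepP (Prev a) a M" using step_exists[OF pc adP cP] by blast
    hence "stepP (Prev a) a (SOME M. stepP (Prev a) a M)" by (rule someI)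
    thus ?case using Nfix unfolding Prev_def by metis
  qed
  define B where "B = \<A> \<union> \<Union>(range N)"
  have stageB: "Prev a \<union> N a \<subseteq> B" for a unfolding B_def Prev_def by blast
  have adB: "almost_disjoint B"
  proof -
    define S where "S = insert \<A> (range (\<lambda>b. Prev b \<union> N b))"
    have "almost_disjoint (\<Union>S)"
    proof (rule ad_chain_union)
      show "\<forall>x\<in>S. almost_disjoint x" unfolding S_def using adA main unfolding stepP_def by blast
      show "\<forall>x\<in>S. \<forall>y\<in>S. x \<subseteq> y \<or> y \<subseteq> x" unfolding S_def using comp Asub by blast
    qed
    moreover have "B \<subseteq> \<Union>S" unfolding S_def B_def by blast
    ultimately show ?thesis using ad_subset by blast
  qed
  have MB: "MAD B" unfolding MAD_def
  proof (intro conjI allI impI)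
    show "almost_disjoint B" by (rule adB)
    fix C assume C: "almost_disjoint C \<and> B \<subseteq> C"
    show "C = B"
    proof
      show "B \<subseteq> C" using C by blast
      show "C \<subseteq> B"
      proof
        fix Z assume Z: "Z \<in> C"
        have "Prev Z \<union> N Z \<union> {Z} \<subseteq> C" using stageB C Z by blast
        hence "almost_disjoint (Prev Z \<union> N Z \<union> {Z})" using C ad_subset by blast
        hence "Z \<in> Prev Z \<union> N Z" using main[of Z] unfolding stepP_def by blast
        thus "Z \<in> B" using stageB by blast
      qed
    qed
  qed
  have SB: "Shelah_Steprans B"
    unfolding Shelah_Steprans_def Shelah_Steprans_ideal_def
  proof
    fix X assume X: "X \<in> fin_pos (ideal_gen B)"
    define t where "t = set_encode ` X"
    have Xf: "\<forall>s\<in>X. finite s" using X unfolding fin_pos_def by blast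
    have dt: "set_decode ` t = X" unfolding t_def image_image using Xf by simp
    have IG: "ideal_gen (Prev t \<union> N t) \<subseteq> ideal_gen B" using stageB ideal_gen_mono by blast
    hence "X \<in> fin_pos (ideal_gen (Prev t \<union> N t))" using X fin_pos_anti by blast
    moreover have "X \<in> fin_pos (ideal_gen (Prev t \<union> N t)) \<longrightarrow>
        (\<exists>Y\<subseteq>X. infinite Y \<and> \<Union>Y \<in> ideal_gen (Prev t \<union> N t))"
      using main[of t] unfolding stepP_def dt by blast
    ultimately obtain Y where "Y \<subseteq> X" "infinite Y" "\<Union>Y \<in> ideal_gen (Prev t \<union> N t)"
      by blast
    thus "\<exists>Y\<subseteq>X. infinite Y \<and> \<Union>Y \<in> ideal_gen B" using IG by blast
  qed
  show ?thesis using MB SB B_def by blast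
qed

end
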